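(* Let $n\ge 2$ be an integer. Then there is a one-to-one correspondence (bijection) between the set $\Sigma_{n^2}$ of all $n^2\times n^2$ S-permutation matrices and the set $\Pi_n$.
   Context: A binary matrix is a matrix with all entries in $\{0,1\}$. For $[n]=\{1,\dots,n\}$, an $n^2\times n^2$ binary matrix $A$ is partitioned by $n-1$ horizontal and $n-1$ vertical lines into $n^2$ non-intersecting $n\times n$ submatrices (blocks) $A_{kl}$, $1\le k,l\le n$, so that $A=[A_{kl}]_{k,l=1}^n$. $A$ is an S-permutation matrix if each row, each column and each block of $A$ contains exactly one entry equal to $1$; $\Sigma_{n^2}$ denotes the set of all $n^2\times n^2$ S-permutation matrices. $\Pi_n$ is the set of all $n\times n$ matrices $\pi$ whose entries are ordered pairs $\langle i,j\rangle$ with $1\le i,j\le n$, such that: for every row $[\langle a_1,b_1\rangle,\dots,\langle a_n,b_n\rangle]$ of $\pi$, the sequence $a_1,\dots,a_n$ is a permutation of $[n]$; and for every column $(\langle a_1,b_1\rangle,\dots,\langle a_n,b_n\rangle)^T$ of $\pi$, the sequence $b_1,\dots,b_n$ is a permutation of $[n]$. *)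

theory Defs
  imports "HOL-Library.FuncSet"
begin

definition block_idx :: "nat \<Rightarrow> nat \<Rightarrow> nat set" where
  "block_idx n k = {(k - 1) * n + 1 .. k * n}"

definition S_perm_matrices :: "nat \<Rightarrow> (nat \<times> nat \<Rightarrow> nat) set" where
  "S_perm_matrices n =
     {A. A \<in> ({1..n^2} \<times> {1..n^2}) \<rightarrow>\<^sub>E {0, 1}
       \<and> (\<forall>i\<in>{1..n^2}. \<exists>!j. j \<in> {1..n^2} \<and> A (i, j) = 1)
       \<and> (\<forall>j\<in>{1..n^2}. \<exists>!i. i \<in> {1..n^2} \<and> A (i, j) = 1)
       \<and> (\<forall>k\<in>{1..n}. \<forall>l\<in>{1..n}.
             \<exists>!p. p \<in> block_idx n k \<times> block_idx n l \<and> A p = 1)}"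

definition Pi_matrices :: "nat \<Rightarrow> (nat \<times> nat \<Rightarrow> nat \<times> nat) set" where
  "Pi_matrices n =
     {\<pi>. \<pi> \<in> ({1..n} \<times> {1..n}) \<rightarrow>\<^sub>E ({1..n} \<times> {1..n})
       \<and> (\<forall>r\<in>{1..n}. bij_betw (\<lambda>c. fst (\<pi> (r, c))) {1..n} {1..n})
       \<and> (\<forall>c\<in>{1..n}. bij_betw (\<lambda>r. snd (\<pi> (r, c))) {1..n} {1..n})}"

end

theory Submission imports Defs begin
definition blk :: "nat \<Rightarrow> nat \<Rightarrow> nat" where "blk n i = (i - 1) div n + 1"
definition loc :: "nat \<Rightarrow> nat \<Rightarrow> nat" where "loc n i = (i - 1) mod n + 1"
definition enc :: "nat \<Rightarrow> nat \<Rightarrow> nat \<Rightarrow> nat" where "enc n k a = (k - 1) * n + a"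

lemma enc_range: assumes "k \<in> {1..n}" "a \<in> {1..n}" shows "enc n k a \<in> {1..n^2}"
proof -
  have 1: "(k-1)*n \<le> (n-1)*n" using assms by (intro mult_le_mono1) auto
  have 2: "(n-1)*n + n = n^2" using assms by (cases n) (auto simp: power2_eq_square)
  have "a \<le> n" using assms by auto
  then have "(k-1)*n + a \<le> n^2" using 1 2 by linarith
  then show ?thesis using assms unfolding enc_def by auto
qed

lemma blk_enc: assumes "a \<in> {1..n}" and that: "k \<ge> 1" shows "blk n (enc n k a) = k" "loc n (enc n k a) = a"
proof -
  have e: "enc n k a - 1 = (a - 1) + (k-1)*n" using assms by (auto simp: enc_def)
  have n: "n > 0" using assms by auto
  have a0: "(a - 1) div n = 0" "(a-1) mod n = a - 1" using n assms by auto
  have d: "((a - 1) + (k-1)*n) div n = k - 1" using n a0 by (simp only: div_mult_self1)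
  have m: "((a - 1) + (k-1)*n) mod n = a - 1" using n a0 by (simp only: mod_mult_self1)
  show "blk n (enc n k a) = k" unfolding blk_def e d using that by simp
  show "loc n (enc n k a) = a" unfolding loc_def e m using assms by simp
qed

lemma blk_range: assumes "i \<in> {1..n^2}" shows "blk n i \<in> {1..n}" "loc n i \<in> {1..n}"
proof -
  have n: "n > 0" using assms by (cases n) auto
  have "i - 1 < n * n" using assms by (auto simp: power2_eq_square)
  then have "(i-1) div n < n" using n by (simp add: div_less_iff_less_mult)
  then show "blk n i \<in> {1..n}" by (auto simp: blk_def)
  have "(i-1) mod n < n" using n by simp
  then show "loc n i \<in> {1..n}" by (auto simp: loc_def)
qed

lemma enc_blk: assumes "i \<ge> 1" shows "enc n (blk n i) (loc n i) = i"
proof -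
  have "(i - 1) div n * n + (i-1) mod n = i - 1" by simp
  then show ?thesis using assms unfolding enc_def blk_def loc_def by simp
qed

lemma block_idx_iff: assumes "k \<in> {1..n}"
  shows "i \<in> block_idx n k \<longleftrightarrow> i \<in> {1..n^2} \<and> blk n i = k"
proof
  assume i: "i \<in> block_idx n k"
  define a where "a = i - (k-1)*n"
  have kn: "k*n = (k-1)*n + n" using assms by (cases k) auto
  have a: "a \<in> {1..n}" "i = enc n k a" using i assms kn unfolding a_def block_idx_def enc_def
    by auto
  then show "i \<in> {1..n^2} \<and> blk n i = k" using enc_range[OF assms a(1)] blk_enc[OF a(1)] assms by auto
next
  assume i: "i \<in> {1..n^2} \<and> blk n i = k"
  then have e: "i = (k-1)*n + loc n i" using enc_blk unfolding enc_def by auto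
  moreover have "loc n i \<in> {1..n}" using blk_range i by auto
  moreover have kn: "k*n = (k-1)*n + n" using assms by (cases k) auto
  ultimately show "i \<in> block_idx n k" using assms unfolding block_idx_def by auto
qed

definition g :: "nat \<Rightarrow> (nat \<times> nat \<Rightarrow> nat \<times> nat) \<Rightarrow> (nat \<times> nat \<Rightarrow> nat)" where
  "g n \<pi> = (\<lambda>(i,j). if i \<in> {1..n^2} \<and> j \<in> {1..n^2} then
      (if \<pi> (blk n i, blk n j) = (loc n i, loc n j) then 1 else 0) else undefined)"

lemma g_PiE: "g n \<pi> \<in> ({1..n^2} \<times> {1..n^2}) \<rightarrow>\<^sub>E {0, 1}"
  unfolding g_def by (auto simp: PiE_def extensional_def split: if_splits)

lemma g_one: "i \<in> {1..n^2} \<Longrightarrow> j \<in> {1..n^2} \<Longrightarrow>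
   g n \<pi> (i,j) = 1 \<longleftrightarrow> \<pi> (blk n i, blk n j) = (loc n i, loc n j)"
  by (simp add: g_def)

lemma g_in: assumes "\<pi> \<in> Pi_matrices n" shows "g n \<pi> \<in> S_perm_matrices n"
proof -
  have PE: "\<pi> \<in> ({1..n} \<times> {1..n}) \<rightarrow>\<^sub>E ({1..n} \<times> {1..n})"
    and R: "\<And>r. r\<in>{1..n} \<Longrightarrow> bij_betw (\<lambda>c. fst (\<pi> (r, c))) {1..n} {1..n}"
    and C: "\<And>c. c\<in>{1..n} \<Longrightarrow> bij_betw (\<lambda>r. snd (\<pi> (r, c))) {1..n} {1..n}"
    using assms unfolding Pi_matrices_def by auto
  have rng: "\<pi> (k,l) \<in> {1..n} \<times> {1..n}" if "k \<in> {1..n}" "l \<in> {1..n}" for k l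
    by (rule PiE_mem[OF PE]) (use that in auto)
  have rows: "\<exists>!j. j \<in> {1..n^2} \<and> g n \<pi> (i, j) = 1" if i: "i \<in> {1..n^2}" for i
  proof -
    define k where "k = blk n i"
    define a where "a = loc n i"
    have k: "k \<in> {1..n}" and a: "a \<in> {1..n}" using blk_range[OF i] k_def a_def by auto
    have "a \<in> (\<lambda>c. fst (\<pi> (k, c))) ` {1..n}" using R[OF k] a by (simp add: bij_betw_def)
    then obtain l where l: "l \<in> {1..n}" "fst (\<pi> (k,l)) = a" by blast
    define b where "b = snd (\<pi> (k,l))"
    have b: "b \<in> {1..n}" using rng[OF k l(1)] b_def by auto
    have pkl: "\<pi> (k,l) = (a,b)" using l(2) b_def by (metis prod.collapse)
    show ?thesis
    proof (rule ex1I[where a="enc n l b"])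
      have l1: "l \<ge> 1" using l by auto
      have "\<pi> (blk n i, blk n (enc n l b)) = (loc n i, loc n (enc n l b))"
        using blk_enc[OF b l1] pkl k_def a_def by simp
      then show "enc n l b \<in> {1..n^2} \<and> g n \<pi> (i, enc n l b) = 1"
        using enc_range[OF l(1) b] i g_one by blast
    next
      fix j assume j: "j \<in> {1..n^2} \<and> g n \<pi> (i, j) = 1"
      then have e: "\<pi> (k, blk n j) = (a, loc n j)" using i g_one k_def a_def by blast
      have bj: "blk n j \<in> {1..n}" using blk_range j by auto
      have "fst (\<pi> (k, blk n j)) = fst (\<pi> (k, l))" using e l by simp
      then have "blk n j = l" using R[OF k] bj l(1) unfolding bij_betw_def by (blast dest: inj_onD)
      then have "loc n j = b" using e pkl by auto
      then show "j = enc n l b" using enc_blk[of j n] j \<open>blk n j = l\<close> by auto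
    qed
  qed
  have cols: "\<exists>!i. i \<in> {1..n^2} \<and> g n \<pi> (i, j) = 1" if j: "j \<in> {1..n^2}" for j
  proof -
    define l where "l = blk n j"
    define b where "b = loc n j"
    have l: "l \<in> {1..n}" and b: "b \<in> {1..n}" using blk_range[OF j] l_def b_def by auto
    have "b \<in> (\<lambda>r. snd (\<pi> (r, l))) ` {1..n}" using C[OF l] b by (simp add: bij_betw_def)
    then obtain k where k: "k \<in> {1..n}" "snd (\<pi> (k,l)) = b" by blast
    define a where "a = fst (\<pi> (k,l))"
    have a: "a \<in> {1..n}" using rng[OF k(1) l] a_def by auto
    have pkl: "\<pi> (k,l) = (a,b)" using k(2) a_def by (metis prod.collapse)
    show ?thesis
    proof (rule ex1I[where a="enc n k a"])
      have k1: "k \<ge> 1" using k by auto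
      have "\<pi> (blk n (enc n k a), blk n j) = (loc n (enc n k a), loc n j)"
        using blk_enc[OF a k1] pkl l_def b_def by simp
      then show "enc n k a \<in> {1..n^2} \<and> g n \<pi> (enc n k a, j) = 1"
        using enc_range[OF k(1) a] j g_one by blast
    next
      fix i assume i: "i \<in> {1..n^2} \<and> g n \<pi> (i, j) = 1"
      then have e: "\<pi> (blk n i, l) = (loc n i, b)" using j g_one l_def b_def by blast
      have bi: "blk n i \<in> {1..n}" using blk_range i by auto
      have "snd (\<pi> (blk n i, l)) = snd (\<pi> (k, l))" using e k by simp
      then have "blk n i = k" using C[OF l] bi k(1) unfolding bij_betw_def by (blast dest: inj_onD)
      then have "loc n i = a" using e pkl by auto
      then show "i = enc n k a" using enc_blk[of i n] i \<open>blk n i = k\<close> by auto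
    qed
  qed
  have blocks: "\<exists>!p. p \<in> block_idx n k \<times> block_idx n l \<and> g n \<pi> p = 1"
    if k: "k \<in> {1..n}" and l: "l \<in> {1..n}" for k l
  proof -
    obtain a b where pkl: "\<pi> (k,l) = (a,b)" by (cases "\<pi> (k,l)")
    have a: "a \<in> {1..n}" and b: "b \<in> {1..n}" using rng[OF k l] pkl by auto
    show ?thesis
    proof (rule ex1I[where a="(enc n k a, enc n l b)"])
      have k1: "k \<ge> 1" and l1: "l \<ge> 1" using k l by auto
      have "\<pi> (blk n (enc n k a), blk n (enc n l b)) = (loc n (enc n k a), loc n (enc n l b))"
        using blk_enc[OF a k1] blk_enc[OF b l1] pkl by simp
      then have "g n \<pi> (enc n k a, enc n l b) = 1"
        using enc_range[OF k a] enc_range[OF l b] g_one by blast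
      moreover have "enc n k a \<in> block_idx n k" "enc n l b \<in> block_idx n l"
        using enc_range[OF k a] enc_range[OF l b] blk_enc[OF a k1] blk_enc[OF b l1]
          block_idx_iff[OF k] block_idx_iff[OF l] by auto
      ultimately show "(enc n k a, enc n l b) \<in> block_idx n k \<times> block_idx n l \<and> g n \<pi> (enc n k a, enc n l b) = 1"
        by blast
    next
      fix p assume p: "p \<in> block_idx n k \<times> block_idx n l \<and> g n \<pi> p = 1"
      obtain i j where ij: "p = (i,j)" by (cases p)
      have i: "i \<in> {1..n^2}" "blk n i = k" and j: "j \<in> {1..n^2}" "blk n j = l"
        using p ij block_idx_iff[OF k] block_idx_iff[OF l] by auto
      then have "\<pi> (k,l) = (loc n i, loc n j)" using p ij g_one by blast
      then have "loc n i = a" "loc n j = b" using pkl by auto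
      then show "p = (enc n k a, enc n l b)" using ij i j enc_blk[of i n] enc_blk[of j n] by auto
    qed
  qed
  show ?thesis unfolding S_perm_matrices_def
    by (intro CollectI conjI ballI g_PiE rows cols blocks) assumption+
qed

lemma g_inj: "inj_on (g n) (Pi_matrices n)"
proof (rule inj_onI)
  fix \<pi>1 \<pi>2 assume p1: "\<pi>1 \<in> Pi_matrices n" and p2: "\<pi>2 \<in> Pi_matrices n" and eq: "g n \<pi>1 = g n \<pi>2"
  have PE1: "\<pi>1 \<in> ({1..n} \<times> {1..n}) \<rightarrow>\<^sub>E ({1..n} \<times> {1..n})"
    and PE2: "\<pi>2 \<in> ({1..n} \<times> {1..n}) \<rightarrow>\<^sub>E ({1..n} \<times> {1..n})"
    using p1 p2 unfolding Pi_matrices_def by auto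
  show "\<pi>1 = \<pi>2"
  proof (rule PiE_ext[OF PE1 PE2])
    fix x assume x: "x \<in> {1..n} \<times> {1..n}"
    obtain k l where kl: "x = (k,l)" by (cases x)
    have k: "k \<in> {1..n}" and l: "l \<in> {1..n}" using x kl by auto
    obtain a b where pkl: "\<pi>1 (k,l) = (a,b)" by (cases "\<pi>1 (k,l)")
    have a: "a \<in> {1..n}" and b: "b \<in> {1..n}" using PiE_mem[OF PE1, of "(k,l)"] k l pkl by auto
    have k1: "k \<ge> 1" and l1: "l \<ge> 1" using k l by auto
    have "\<pi>1 (blk n (enc n k a), blk n (enc n l b)) = (loc n (enc n k a), loc n (enc n l b))"
      using blk_enc[OF a k1] blk_enc[OF b l1] pkl by simp
    then have "g n \<pi>1 (enc n k a, enc n l b) = 1"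
      using enc_range[OF k a] enc_range[OF l b] g_one by blast
    then have "g n \<pi>2 (enc n k a, enc n l b) = 1" using eq by simp
    then have "\<pi>2 (blk n (enc n k a), blk n (enc n l b)) = (loc n (enc n k a), loc n (enc n l b))"
      using enc_range[OF k a] enc_range[OF l b] g_one by blast
    then have "\<pi>2 (k,l) = (a,b)" using blk_enc[OF a k1] blk_enc[OF b l1] by simp
    then show "\<pi>1 x = \<pi>2 x" using kl pkl by simp
  qed
qed

lemma enc_inj: "i \<in> {1..n^2} \<Longrightarrow> j \<in> {1..n^2} \<Longrightarrow> blk n i = blk n j \<Longrightarrow> loc n i = loc n j \<Longrightarrow> i = j"
  by (metis enc_blk atLeastAtMost_iff)

lemma ex1_uniq: "\<exists>!x. P x \<Longrightarrow> P a \<Longrightarrow> P b \<Longrightarrow> a = b"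
  by blast

lemma endo_bij: assumes "inj_on f {1..(n::nat)}" "\<And>x. x \<in> {1..n} \<Longrightarrow> f x \<in> {1..n}"
  shows "bij_betw f {1..n} {1..n}"
proof -
  have "f ` {1..n} \<subseteq> {1..n}" using assms(2) by blast
  then have "f ` {1..n} = {1..n}" using endo_inj_surj[of "{1..n}" f] assms(1) by blast
  then show ?thesis using assms(1) unfolding bij_betw_def by blast
qed

lemma g_surj: assumes A: "A \<in> S_perm_matrices n" shows "\<exists>\<pi>\<in>Pi_matrices n. A = g n \<pi>"
proof -
  have APE: "A \<in> ({1..n^2} \<times> {1..n^2}) \<rightarrow>\<^sub>E {0, 1}"
    and AR: "\<And>i. i\<in>{1..n^2} \<Longrightarrow> \<exists>!j. j \<in> {1..n^2} \<and> A (i, j) = 1"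
    and AC: "\<And>j. j\<in>{1..n^2} \<Longrightarrow> \<exists>!i. i \<in> {1..n^2} \<and> A (i, j) = 1"
    and AB: "\<And>k l. k\<in>{1..n} \<Longrightarrow> l\<in>{1..n} \<Longrightarrow>
             \<exists>!p. p \<in> block_idx n k \<times> block_idx n l \<and> A p = 1"
    using A unfolding S_perm_matrices_def by auto
  define pt where "pt k l = (THE p. p \<in> block_idx n k \<times> block_idx n l \<and> A p = 1)" for k l
  have pt: "fst (pt k l) \<in> {1..n^2}" "blk n (fst (pt k l)) = k"
           "snd (pt k l) \<in> {1..n^2}" "blk n (snd (pt k l)) = l" "A (pt k l) = 1"
    if k: "k \<in> {1..n}" and l: "l \<in> {1..n}" for k l
  proof -
    have "pt k l \<in> block_idx n k \<times> block_idx n l \<and> A (pt k l) = 1"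
      unfolding pt_def by (rule theI'[OF AB[OF k l]])
    then show "fst (pt k l) \<in> {1..n^2}" "blk n (fst (pt k l)) = k"
           "snd (pt k l) \<in> {1..n^2}" "blk n (snd (pt k l)) = l" "A (pt k l) = 1"
      using block_idx_iff[OF k] block_idx_iff[OF l] by (auto simp: mem_Times_iff)
  qed
  have pt_uniq: "pt k l = (i,j)" if k: "k \<in> {1..n}" and l: "l \<in> {1..n}"
    and i: "i \<in> {1..n^2}" "blk n i = k" and j: "j \<in> {1..n^2}" "blk n j = l" and a: "A (i,j) = 1" for k l i j
  proof -
    have "(i,j) \<in> block_idx n k \<times> block_idx n l \<and> A (i,j) = 1"
      using block_idx_iff[OF k] block_idx_iff[OF l] i j a by auto
    then show ?thesis unfolding pt_def by (rule the1_equality[OF AB[OF k l]])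
  qed
  define \<pi> where "\<pi> = (\<lambda>(k,l). if k \<in> {1..n} \<and> l \<in> {1..n} then
       (loc n (fst (pt k l)), loc n (snd (pt k l))) else undefined)"
  have \<pi>kl: "\<pi> (k,l) = (loc n (fst (pt k l)), loc n (snd (pt k l)))" if "k \<in> {1..n}" "l \<in> {1..n}" for k l
    using that unfolding \<pi>_def by simp
  have PE: "\<pi> \<in> ({1..n} \<times> {1..n}) \<rightarrow>\<^sub>E ({1..n} \<times> {1..n})"
    unfolding \<pi>_def using pt blk_range by (auto simp: PiE_def extensional_def)
  have R: "bij_betw (\<lambda>c. fst (\<pi> (r, c))) {1..n} {1..n}" if r: "r \<in> {1..n}" for r
  proof (rule endo_bij)
    show "fst (\<pi> (r, c)) \<in> {1..n}" if "c \<in> {1..n}" for c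
      using \<pi>kl[OF r that] blk_range pt[OF r that] by auto
    show "inj_on (\<lambda>c. fst (\<pi> (r, c))) {1..n}"
    proof (rule inj_onI)
      fix c1 c2 assume c1: "c1 \<in> {1..n}" and c2: "c2 \<in> {1..n}" and e: "fst (\<pi> (r, c1)) = fst (\<pi> (r, c2))"
      have lq: "loc n (fst (pt r c1)) = loc n (fst (pt r c2))" using e \<pi>kl[OF r c1] \<pi>kl[OF r c2] by simp
      have f: "fst (pt r c1) = fst (pt r c2)"
        using enc_inj[OF pt(1)[OF r c1] pt(1)[OF r c2] _ lq] pt(2)[OF r c1] pt(2)[OF r c2] by simp
      have a1: "A (fst (pt r c1), snd (pt r c1)) = 1" using pt(5)[OF r c1] by simp
      have a2: "A (fst (pt r c1), snd (pt r c2)) = 1" unfolding f using pt(5)[OF r c2] by simp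
      have "snd (pt r c1) = snd (pt r c2)"
        by (rule ex1_uniq[OF AR[OF pt(1)[OF r c1]]]) (use a1 a2 pt(3)[OF r c1] pt(3)[OF r c2] in blast)+
      then show "c1 = c2" using pt(4)[OF r c1] pt(4)[OF r c2] by metis
    qed
  qed
  have C: "bij_betw (\<lambda>r. snd (\<pi> (r, c))) {1..n} {1..n}" if c: "c \<in> {1..n}" for c
  proof (rule endo_bij)
    show "snd (\<pi> (r, c)) \<in> {1..n}" if "r \<in> {1..n}" for r
      using \<pi>kl[OF that c] blk_range pt[OF that c] by auto
    show "inj_on (\<lambda>r. snd (\<pi> (r, c))) {1..n}"
    proof (rule inj_onI)
      fix c1 c2 assume c1: "c1 \<in> {1..n}" and c2: "c2 \<in> {1..n}" and e: "snd (\<pi> (c1, c)) = snd (\<pi> (c2, c))"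
      have lq: "loc n (snd (pt c1 c)) = loc n (snd (pt c2 c))" using e \<pi>kl[OF c1 c] \<pi>kl[OF c2 c] by simp
      have f: "snd (pt c1 c) = snd (pt c2 c)"
        using enc_inj[OF pt(3)[OF c1 c] pt(3)[OF c2 c] _ lq] pt(4)[OF c1 c] pt(4)[OF c2 c] by simp
      have a1: "A (fst (pt c1 c), snd (pt c1 c)) = 1" using pt(5)[OF c1 c] by simp
      have a2: "A (fst (pt c2 c), snd (pt c1 c)) = 1" unfolding f using pt(5)[OF c2 c] by simp
      have "fst (pt c1 c) = fst (pt c2 c)"
        by (rule ex1_uniq[OF AC[OF pt(3)[OF c1 c]]]) (use a1 a2 pt(1)[OF c1 c] pt(1)[OF c2 c] in blast)+
      then show "c1 = c2" using pt(2)[OF c1 c] pt(2)[OF c2 c] by metis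
    qed
  qed
  have \<pi>P: "\<pi> \<in> Pi_matrices n" unfolding Pi_matrices_def
    by (intro CollectI conjI ballI PE R C) assumption+
  have "A = g n \<pi>"
  proof (rule PiE_ext[OF APE g_PiE])
    fix x assume x: "x \<in> {1..n^2} \<times> {1..n^2}"
    obtain i j where ij: "x = (i,j)" by (cases x)
    have i: "i \<in> {1..n^2}" and j: "j \<in> {1..n^2}" using x ij by auto
    define k where "k = blk n i"
    define l where "l = blk n j"
    have k: "k \<in> {1..n}" and l: "l \<in> {1..n}" using blk_range i j k_def l_def by auto
    have gv: "g n \<pi> (i,j) = (if \<pi> (k,l) = (loc n i, loc n j) then 1 else 0)"
      using i j unfolding k_def l_def by (simp add: g_def)
    have "A (i,j) \<in> {0,1}" using PiE_mem[OF APE, of "(i,j)"] i j by auto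
    then consider "A (i,j) = 1" | "A (i,j) = 0" by auto
    then show "A x = g n \<pi> x"
    proof cases
      case 1
      have "pt k l = (i,j)" using pt_uniq[OF k l i _ j _ 1] k_def l_def by simp
      then show ?thesis using gv \<pi>kl[OF k l] ij 1 by simp
    next
      case 2
      have "\<pi> (k,l) \<noteq> (loc n i, loc n j)"
      proof
        assume e: "\<pi> (k,l) = (loc n i, loc n j)"
        have lq1: "loc n (fst (pt k l)) = loc n i" "loc n (snd (pt k l)) = loc n j" using e \<pi>kl[OF k l] by auto
        have "fst (pt k l) = i" using enc_inj[OF pt(1)[OF k l] i _ lq1(1)] pt(2)[OF k l] k_def by simp
        moreover have "snd (pt k l) = j" using enc_inj[OF pt(3)[OF k l] j _ lq1(2)] pt(4)[OF k l] l_def by simp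
        ultimately have "pt k l = (i,j)" by (metis prod.collapse)
        then show False using pt(5)[OF k l] 2 by simp
      qed
      then show ?thesis using gv ij 2 by simp
    qed
  qed
  then show ?thesis using \<pi>P by blast
qed

theorem mainTheorem1:
  fixes n :: nat
  assumes "n \<ge> 2"
  shows "\<exists>f. bij_betw f (S_perm_matrices n) (Pi_matrices n)"
proof -
  have "g n ` Pi_matrices n = S_perm_matrices n"
    using g_in g_surj by blast
  then have "bij_betw (g n) (Pi_matrices n) (S_perm_matrices n)"
    using g_inj unfolding bij_betw_def by blast
  then show ?thesis using bij_betw_inv_into by blast
qed
end
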